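(* Let $G=(V,E)$ be a graph, let $W\subseteq V$ be a vertex cover of $G$, and let $S\subseteq V$ be a minimal separator of $G$. Let $(D_1,S,D_2)$ be a partition of $V$ such that each of $D_1$ and $D_2$ is a union of connected components of $G-S$, and each of $D_1$ and $D_2$ contains at least one full component associated to $S$. Put $D_1^W=D_1\cap W$ and $D_2^W=D_2\cap W$. Then $$S\setminus W=\{x\in V\setminus W \mid N(x)\cap D_1^W\neq\emptyset \text{ and } N(x)\cap D_2^W\neq\emptyset\}.$$
   Context: All graphs are finite, simple and undirected. $N(x)$ is the open neighborhood of $x$; for $S\subseteq V$, $N(S)=\bigcup_{v\in S}N(v)\setminus S$; $G-S$ is the subgraph induced by $V\setminus S$. A connected component is the vertex set of a maximal connected induced subgraph. A vertex set $W$ is a vertex cover if every edge has an endpoint in $W$. For vertices $u,v$, a set $S$ is a $u,v$-separator if $u,v$ lie in different components of $G-S$; it is a minimal $u,v$-separator if it is inclusion-minimal among $u,v$-separators; $S$ is a minimal separator of $G$ if it is a minimal $u,v$-separator for some $u,v$. A component $C$ of $G-S$ is a full component associated to $S$ if $N(C)=S$. *)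

theory Defs
  imports Main
begin

definition graph :: "'a set \<Rightarrow> 'a set set \<Rightarrow> bool" where
  "graph V E \<longleftrightarrow> finite V \<and> (\<forall>e\<in>E. e \<subseteq> V \<and> card e = 2)"

definition nbr :: "'a set set \<Rightarrow> 'a \<Rightarrow> 'a set" where
  "nbr E x = {y. {x, y} \<in> E}"

definition nbrs :: "'a set set \<Rightarrow> 'a set \<Rightarrow> 'a set" where
  "nbrs E S = (\<Union>v\<in>S. nbr E v) - S"

definition conn_in :: "'a set set \<Rightarrow> 'a set \<Rightarrow> 'a \<Rightarrow> 'a \<Rightarrow> bool" where
  "conn_in E U u v \<longleftrightarrow> u \<in> U \<and> v \<in> U \<and>
     (\<lambda>x y. x \<in> U \<and> y \<in> U \<and> {x, y} \<in> E)\<^sup>*\<^sup>* u v"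

definition components :: "'a set \<Rightarrow> 'a set set \<Rightarrow> 'a set \<Rightarrow> 'a set set" where
  "components V E S = {{v. conn_in E (V - S) u v} | u. u \<in> V - S}"

definition separator :: "'a set \<Rightarrow> 'a set set \<Rightarrow> 'a \<Rightarrow> 'a \<Rightarrow> 'a set \<Rightarrow> bool" where
  "separator V E u v S \<longleftrightarrow> S \<subseteq> V \<and> u \<in> V - S \<and> v \<in> V - S \<and> \<not> conn_in E (V - S) u v"

definition minimal_separator_uv :: "'a set \<Rightarrow> 'a set set \<Rightarrow> 'a \<Rightarrow> 'a \<Rightarrow> 'a set \<Rightarrow> bool" where
  "minimal_separator_uv V E u v S \<longleftrightarrow> separator V E u v S \<and>
     (\<forall>T. T \<subset> S \<longrightarrow> \<not> separator V E u v T)"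

definition minimal_separator :: "'a set \<Rightarrow> 'a set set \<Rightarrow> 'a set \<Rightarrow> bool" where
  "minimal_separator V E S \<longleftrightarrow> (\<exists>u v. minimal_separator_uv V E u v S)"

definition full_component :: "'a set \<Rightarrow> 'a set set \<Rightarrow> 'a set \<Rightarrow> 'a set \<Rightarrow> bool" where
  "full_component V E S C \<longleftrightarrow> C \<in> components V E S \<and> nbrs E C = S"

definition vertex_cover :: "'a set \<Rightarrow> 'a set set \<Rightarrow> 'a set \<Rightarrow> bool" where
  "vertex_cover V E W \<longleftrightarrow> W \<subseteq> V \<and> (\<forall>e\<in>E. e \<inter> W \<noteq> {})"

end

theory Submission
  imports Defs
begin

lemma comp_closed:
  assumes K: "K \<in> components V E S" and x: "x \<in> K" and b: "b \<in> V - S" and e: "{x,b} \<in> E"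
  shows "b \<in> K"
proof -
  from K obtain u where u: "u \<in> V - S" and Kd: "K = {v. conn_in E (V - S) u v}"
    unfolding components_def by blast
  from x Kd have cx: "conn_in E (V - S) u x" by simp
  hence "(\<lambda>x y. x \<in> V - S \<and> y \<in> V - S \<and> {x, y} \<in> E)\<^sup>*\<^sup>* u b"
    using b e unfolding conn_in_def
    by (rule_tac rtranclp.rtrancl_into_rtrancl[where b=x]) auto
  thus ?thesis using Kd cx b unfolding conn_in_def by simp
qed

lemma side:
  assumes "\<exists>\<C>. \<C> \<subseteq> components V E S \<and> D1 = \<Union>\<C>"
    and "x \<in> D1" and "b \<in> D2" and "D1 \<inter> D2 = {}" and "b \<in> V - S" and "{x,b} \<in> E"
  shows False
proof -
  obtain \<C> where C: "\<C> \<subseteq> components V E S" "D1 = \<Union>\<C>" using assms(1) by blast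
  then obtain K where "K \<in> \<C>" "x \<in> K" using assms(2) by blast
  hence "b \<in> K" using comp_closed[of K V E S x b] C assms by blast
  thus False using \<open>K \<in> \<C>\<close> C assms by blast
qed

theorem lemma1:
  fixes V :: "'a set" and E :: "'a set set" and W S D1 D2 :: "'a set"
  assumes "graph V E"
    and "vertex_cover V E W"
    and "minimal_separator V E S"
    and "D1 \<union> S \<union> D2 = V" and "D1 \<inter> S = {}" and "D2 \<inter> S = {}" and "D1 \<inter> D2 = {}"
    and "\<exists>\<C>. \<C> \<subseteq> components V E S \<and> D1 = \<Union>\<C>"
    and "\<exists>\<C>. \<C> \<subseteq> components V E S \<and> D2 = \<Union>\<C>"
    and "\<exists>C. full_component V E S C \<and> C \<subseteq> D1"
    and "\<exists>C. full_component V E S C \<and> C \<subseteq> D2"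
  shows "S - W = {x \<in> V - W. nbr E x \<inter> (D1 \<inter> W) \<noteq> {} \<and> nbr E x \<inter> (D2 \<inter> W) \<noteq> {}}"
proof
  have vc: "\<And>e. e \<in> E \<Longrightarrow> e \<inter> W \<noteq> {}" using assms(2) unfolding vertex_cover_def by blast
  have key: "\<And>C D x. full_component V E S C \<Longrightarrow> C \<subseteq> D \<Longrightarrow> x \<in> S - W \<Longrightarrow> nbr E x \<inter> (D \<inter> W) \<noteq> {}"
  proof -
    fix C D x assume f: "full_component V E S C" and CD: "C \<subseteq> D" and x: "x \<in> S - W"
    from f x have "x \<in> nbrs E C" unfolding full_component_def by blast
    then obtain v where v: "v \<in> C" "{v,x} \<in> E" unfolding nbrs_def nbr_def by blast
    from vc[OF v(2)] x have "v \<in> W" by blast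
    moreover have "{x,v} = {v,x}" by blast
    ultimately have "v \<in> nbr E x \<inter> (D \<inter> W)" using v CD unfolding nbr_def by auto
    thus "nbr E x \<inter> (D \<inter> W) \<noteq> {}" by blast
  qed
  show "S - W \<subseteq> {x \<in> V - W. nbr E x \<inter> (D1 \<inter> W) \<noteq> {} \<and> nbr E x \<inter> (D2 \<inter> W) \<noteq> {}}"
    using key assms(4,10,11) by blast
  show "{x \<in> V - W. nbr E x \<inter> (D1 \<inter> W) \<noteq> {} \<and> nbr E x \<inter> (D2 \<inter> W) \<noteq> {}} \<subseteq> S - W"
  proof
    fix x assume x: "x \<in> {x \<in> V - W. nbr E x \<inter> (D1 \<inter> W) \<noteq> {} \<and> nbr E x \<inter> (D2 \<inter> W) \<noteq> {}}"
    then obtain a b where a: "a \<in> D1" "{x,a} \<in> E" and b: "b \<in> D2" "{x,b} \<in> E"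
      unfolding nbr_def by blast
    have "x \<in> S"
    proof (rule ccontr)
      assume "x \<notin> S"
      hence "x \<in> D1 \<or> x \<in> D2" using x assms(4) by blast
      thus False
      proof
        assume "x \<in> D1"
        thus False using side[OF assms(8) _ b(1) assms(7) _ b(2)] b assms(4,6) by blast
      next
        assume "x \<in> D2"
        moreover have "D2 \<inter> D1 = {}" using assms(7) by blast
        ultimately show False using side[OF assms(9) _ a(1) _ _ a(2)] a assms(4,5) by blast
      qed
    qed
    thus "x \<in> S - W" using x by blast
  qed
qed

end
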